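(* Let $\boldsymbol\gamma\in(0,\infty)^B$ and parameters $0<\alpha<\beta$, $\kappa>0$, $a\in\mathbb R$ with $\kappa\log_2\alpha+a=\log_2(1+\alpha)$ and $\kappa(1+\alpha)\le\alpha$; define $I^{\rm ref}(\rho)=\log_2(1+\rho)$ for $0\le\rho\le\alpha$, $\kappa\log_2\rho+a$ for $\alpha<\rho\le\beta$, and $\kappa\log_2\beta+a$ for $\rho>\beta$. Let $0<R<\kappa\log_2\beta+a$. The problem \[ \text{minimize }\frac1B\sum_{b=1}^B\wp_b\quad\text{subject to}\quad\frac1B\sum_{b=1}^BI^{\rm ref}(\wp_b\gamma_b)\ge R,\ \wp_b\ge0, \] is solved by \[ \wp_b=\begin{cases}\beta/\gamma_b,&\eta\ge\frac{\beta}{\kappa\gamma_b},\\ \kappa\eta,&\frac{\alpha}{\kappa\gamma_b}<\eta<\frac{\beta}{\kappa\gamma_b},\\ \alpha/\gamma_b,&\frac{\alpha+1}{\gamma_b}\le\eta\le\frac{\alpha}{\kappa\gamma_b},\\ \eta-1/\gamma_b,&\frac1{\gamma_b}\le\eta<\frac{\alpha+1}{\gamma_b},\\ 0,&\text{otherwise},\end{cases} \] where $\eta$ is chosen such that $\sum_{b=1}^BI^{\rm ref}(\wp_b\gamma_b)=BR$.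
   Context: $I^{\rm ref}$ is a piecewise approximation (refined truncated water-filling) of a discrete-input mutual information curve; the condition $\kappa(1+\alpha)\le\alpha$ ensures that its slope does not increase at $\rho=\alpha$. *)

theory Defs
  imports Complex_Main
begin

definition Iref :: "real \<Rightarrow> real \<Rightarrow> real \<Rightarrow> real \<Rightarrow> real \<Rightarrow> real" where
  "Iref \<alpha> \<beta> \<kappa> a \<rho> =
     (if \<rho> \<le> \<alpha> then log 2 (1 + \<rho>)
      else if \<rho> \<le> \<beta> then \<kappa> * log 2 \<rho> + a
      else \<kappa> * log 2 \<beta> + a)"

definition wp :: "real \<Rightarrow> real \<Rightarrow> real \<Rightarrow> real \<Rightarrow> real \<Rightarrow> real" where
  "wp \<alpha> \<beta> \<kappa> g \<eta> =
     (if \<eta> \<ge> \<beta> / (\<kappa> * g) then \<beta> / g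
      else if \<alpha> / (\<kappa> * g) < \<eta> \<and> \<eta> < \<beta> / (\<kappa> * g) then \<kappa> * \<eta>
      else if (\<alpha> + 1) / g \<le> \<eta> \<and> \<eta> \<le> \<alpha> / (\<kappa> * g) then \<alpha> / g
      else if 1 / g \<le> \<eta> \<and> \<eta> < (\<alpha> + 1) / g then \<eta> - 1 / g
      else 0)"

definition feasible :: "nat \<Rightarrow> (nat \<Rightarrow> real) \<Rightarrow> real \<Rightarrow> real \<Rightarrow> real \<Rightarrow> real \<Rightarrow> real \<Rightarrow> (nat \<Rightarrow> real) \<Rightarrow> bool" where
  "feasible B \<gamma> \<alpha> \<beta> \<kappa> a R p \<longleftrightarrow>
     (\<forall>b<B. p b \<ge> 0) \<and> (1 / real B) * (\<Sum>b<B. Iref \<alpha> \<beta> \<kappa> a (p b * \<gamma> b)) \<ge> R"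

end

theory Submission
  imports Defs
begin

lemma ln_tangent: "0 < (x::real) \<Longrightarrow> 0 < y \<Longrightarrow> ln x \<le> ln y + (1 / y) * (x - y)"
proof -
  assume x: "0<x" and y: "0<y"
  have "ln (x/y) \<le> x/y - 1" using ln_le_minus_one[of "x/y"] x y by simp
  moreover have "ln (x/y) = ln x - ln y" using x y by (simp add: ln_div)
  moreover have "x/y - 1 = (1/y)*(x-y)" using y by (simp add: field_simps)
  ultimately show ?thesis by simp
qed

definition rr :: "real \<Rightarrow> real \<Rightarrow> real \<Rightarrow> real \<Rightarrow> real" where
  "rr \<alpha> \<beta> \<kappa> u = (if \<beta> \<le> \<kappa>*u then \<beta> else if \<alpha> < \<kappa>*u then \<kappa>*u
     else if \<alpha>+1 \<le> u then \<alpha> else if 1 \<le> u then u - 1 else 0)"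

context
  fixes \<alpha> \<beta> \<kappa> a :: real
  assumes al: "0 < \<alpha>" and ab: "\<alpha> < \<beta>" and kp: "\<kappa> > 0"
    and eqa: "\<kappa> * log 2 \<alpha> + a = log 2 (1 + \<alpha>)"
    and kc: "\<kappa> * (1 + \<alpha>) \<le> \<alpha>"
begin

lemma eqln: "\<kappa> * ln \<alpha> + a * ln 2 = ln (1 + \<alpha>)"
proof -
  have "ln 2 * (\<kappa> * log 2 \<alpha> + a) = ln 2 * log 2 (1+\<alpha>)" using eqa by simp
  hence "(\<kappa> * ln \<alpha> + a * ln 2) * ln 2 = ln (1 + \<alpha>) * ln 2" using al by (simp add: log_def field_simps)
  thus ?thesis by simp
qed

lemma h1: "\<sigma> \<le> \<alpha> \<Longrightarrow> ln 2 * Iref \<alpha> \<beta> \<kappa> a \<sigma> = ln (1 + \<sigma>)"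
  by (simp add: Iref_def log_def)
lemma h2: "\<alpha> < \<sigma> \<Longrightarrow> \<sigma> \<le> \<beta> \<Longrightarrow> ln 2 * Iref \<alpha> \<beta> \<kappa> a \<sigma> = \<kappa> * ln \<sigma> + a * ln 2"
  by (simp add: Iref_def log_def field_simps)
lemma h3: "\<beta> < \<sigma> \<Longrightarrow> ln 2 * Iref \<alpha> \<beta> \<kappa> a \<sigma> = \<kappa> * ln \<beta> + a * ln 2"
  using ab by (simp add: Iref_def log_def field_simps)

lemma Kc: "\<kappa> / \<alpha> \<le> 1 / (1 + \<alpha>)"
  using kc al by (simp add: field_simps)

lemma ktan: "0 < y \<Longrightarrow> 0 < x \<Longrightarrow> \<kappa> * ln x \<le> \<kappa> * ln y + (\<kappa> / y) * (x - y)"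
proof -
  assume "0<y" "0<x"
  hence "ln x \<le> ln y + (1/y)*(x-y)" by (rule ln_tangent[rotated])
  hence "\<kappa> * ln x \<le> \<kappa> * (ln y + (1/y)*(x-y))" using kp by (simp add: mult_left_mono)
  thus ?thesis by (simp add: algebra_simps)
qed

lemma F3: "\<alpha> \<le> \<sigma> \<Longrightarrow> ln 2 * Iref \<alpha> \<beta> \<kappa> a \<sigma> \<le> ln (1+\<alpha>) + (\<kappa> / \<alpha>) * (\<sigma> - \<alpha>)"
proof -
  assume s: "\<alpha> \<le> \<sigma>"
  show ?thesis
  proof (cases "\<sigma> = \<alpha>")
    case True thus ?thesis using h1 by simp
  next
    case False
    show ?thesis
    proof (cases "\<sigma> \<le> \<beta>")
      case True
      thus ?thesis using h2[of \<sigma>] False s ktan[of \<alpha> \<sigma>] al eqln by linarith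
    next
      case False
      have "(\<kappa>/\<alpha>) * (\<beta> - \<alpha>) \<le> (\<kappa>/\<alpha>) * (\<sigma>-\<alpha>)" using False kp al by (intro mult_left_mono) auto
      thus ?thesis using h3[of \<sigma>] False ktan[of \<alpha> \<beta>] ab al eqln by linarith
    qed
  qed
qed

lemma F4: "0 \<le> \<sigma> \<Longrightarrow> \<sigma> \<le> \<alpha> \<Longrightarrow> ln 2 * Iref \<alpha> \<beta> \<kappa> a \<sigma> \<le> ln (1+\<alpha>) + (1/(1+\<alpha>)) * (\<sigma> - \<alpha>)"
  using h1[of \<sigma>] ln_tangent[of "1+\<sigma>" "1+\<alpha>"] al by simp

lemma G: "0 \<le> \<sigma> \<Longrightarrow> ln 2 * Iref \<alpha> \<beta> \<kappa> a \<sigma> \<le> ln (1+\<alpha>) + (1/(1+\<alpha>)) * (\<sigma> - \<alpha>)"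
proof (cases "\<sigma> \<le> \<alpha>")
  case True
  assume "0 \<le> \<sigma>" thus ?thesis using F4 True by simp
next
  case False
  have "(\<sigma> - \<alpha>) * (\<kappa>/\<alpha>) \<le> (\<sigma> - \<alpha>) * (1/(1+\<alpha>))" using False Kc by (intro mult_left_mono) auto
  thus ?thesis using F3[of \<sigma>] False by (simp add: mult.commute)
qed

lemma T: "\<alpha> < \<rho> \<Longrightarrow> \<rho> \<le> \<beta> \<Longrightarrow> 0 \<le> \<sigma> \<Longrightarrow> \<sigma> \<le> \<beta> \<Longrightarrow>
  ln 2 * Iref \<alpha> \<beta> \<kappa> a \<sigma> \<le> ln 2 * Iref \<alpha> \<beta> \<kappa> a \<rho> + (\<kappa>/\<rho>) * (\<sigma> - \<rho>)"
proof -
  assume r: "\<alpha> < \<rho>" "\<rho> \<le> \<beta>" and s: "0 \<le> \<sigma>" "\<sigma> \<le> \<beta>"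
  have hr: "ln 2 * Iref \<alpha> \<beta> \<kappa> a \<rho> = \<kappa> * ln \<rho> + a * ln 2" using h2 r by simp
  show ?thesis
  proof (cases "\<sigma> \<le> \<alpha>")
    case False
    thus ?thesis using h2[of \<sigma>] s hr ktan[of \<rho> \<sigma>] r al by simp
  next
    case True
    have 1: "ln 2 * Iref \<alpha> \<beta> \<kappa> a \<sigma> \<le> ln (1+\<alpha>) + (1/(1+\<alpha>)) * (\<sigma> - \<alpha>)" using F4 s True by simp
    have 2: "\<kappa> * ln \<alpha> \<le> \<kappa> * ln \<rho> + (\<kappa>/\<rho>) * (\<alpha> - \<rho>)" using ktan[of \<rho> \<alpha>] r al by simp
    have 3: "(\<sigma> - \<alpha>) * (1/(1+\<alpha>)) \<le> (\<sigma> - \<alpha>) * (\<kappa>/\<alpha>)" using True Kc by (intro mult_left_mono_neg) auto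
    have "\<kappa>/\<rho> \<le> \<kappa>/\<alpha>" using r al kp by (intro divide_left_mono) auto
    hence 4: "(\<sigma> - \<alpha>) * (\<kappa>/\<alpha>) \<le> (\<sigma> - \<alpha>) * (\<kappa>/\<rho>)" using True by (intro mult_left_mono_neg) auto
    have 5: "(\<kappa>/\<rho>) * (\<alpha> - \<rho>) + (\<sigma> - \<alpha>) * (\<kappa>/\<rho>) = (\<kappa>/\<rho>) * (\<sigma> - \<rho>)" using r al by (simp add: field_simps)
    show ?thesis using 1 2 3 4 5 hr eqln by (simp add: mult.commute)
  qed
qed

lemma sg:
  assumes u: "0 < u" and s: "0 \<le> \<sigma>"
  shows "ln 2 * Iref \<alpha> \<beta> \<kappa> a \<sigma> \<le> ln 2 * Iref \<alpha> \<beta> \<kappa> a (rr \<alpha> \<beta> \<kappa> u) + (1/u) * (\<sigma> - rr \<alpha> \<beta> \<kappa> u)"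
proof -
  consider (c1) "\<beta> \<le> \<kappa>*u" | (c2) "\<alpha> < \<kappa>*u" "\<kappa>*u < \<beta>" | (c3) "\<kappa>*u \<le> \<alpha>" "\<alpha>+1 \<le> u"
    | (c4) "\<kappa>*u \<le> \<alpha>" "1 \<le> u" "u < \<alpha>+1" | (c5) "\<kappa>*u \<le> \<alpha>" "u < 1" by linarith
  thus ?thesis
  proof cases
    case c1
    hence r: "rr \<alpha> \<beta> \<kappa> u = \<beta>" by (simp add: rr_def)
    have cb: "1/u \<le> \<kappa>/\<beta>" using c1 u ab al by (simp add: field_simps)
    show ?thesis
    proof (cases "\<sigma> \<le> \<beta>")
      case True
      have "ln 2 * Iref \<alpha> \<beta> \<kappa> a \<sigma> \<le> ln 2 * Iref \<alpha> \<beta> \<kappa> a \<beta> + (\<kappa>/\<beta>) * (\<sigma> - \<beta>)"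
        using T[of \<beta> \<sigma>] ab s True by simp
      moreover have "(\<sigma> - \<beta>) * (\<kappa>/\<beta>) \<le> (\<sigma> - \<beta>) * (1/u)" using True cb by (intro mult_left_mono_neg) auto
      ultimately show ?thesis using r by (simp add: mult.commute)
    next
      case False
      have "ln 2 * Iref \<alpha> \<beta> \<kappa> a \<sigma> = ln 2 * Iref \<alpha> \<beta> \<kappa> a \<beta>" using h3[of \<sigma>] h2[of \<beta>] False ab by simp
      moreover have "0 \<le> (1/u) * (\<sigma> - \<beta>)" using False u by simp
      ultimately show ?thesis using r by simp
    qed
  next
    case c2
    hence r: "rr \<alpha> \<beta> \<kappa> u = \<kappa>*u" by (simp add: rr_def)
    have cc: "\<kappa>/(\<kappa>*u) = 1/u" using kp by simp
    show ?thesis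
    proof (cases "\<sigma> \<le> \<beta>")
      case True
      thus ?thesis using T[of "\<kappa>*u" \<sigma>] c2 s r cc by simp
    next
      case False
      have "ln 2 * Iref \<alpha> \<beta> \<kappa> a \<sigma> = ln 2 * Iref \<alpha> \<beta> \<kappa> a \<beta>" using h3[of \<sigma>] h2[of \<beta>] False ab by simp
      moreover have "ln 2 * Iref \<alpha> \<beta> \<kappa> a \<beta> \<le> ln 2 * Iref \<alpha> \<beta> \<kappa> a (\<kappa>*u) + (1/u) * (\<beta> - \<kappa>*u)"
        using T[of "\<kappa>*u" \<beta>] c2 ab al cc by simp
      moreover have "(1/u) * (\<beta> - \<kappa>*u) \<le> (1/u) * (\<sigma> - \<kappa>*u)" using False u by (intro mult_left_mono) auto
      ultimately show ?thesis using r by simp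
    qed
  next
    case c3
    hence r: "rr \<alpha> \<beta> \<kappa> u = \<alpha>" using al ab by (simp add: rr_def)
    have ca: "1/u \<le> 1/(1+\<alpha>)" using c3 al by (simp add: field_simps)
    have cb: "\<kappa>/\<alpha> \<le> 1/u" using c3 al u by (simp add: field_simps)
    have ha: "ln 2 * Iref \<alpha> \<beta> \<kappa> a \<alpha> = ln (1+\<alpha>)" using h1 by simp
    show ?thesis
    proof (cases "\<sigma> \<le> \<alpha>")
      case True
      have "(\<sigma> - \<alpha>) * (1/(1+\<alpha>)) \<le> (\<sigma> - \<alpha>) * (1/u)" using True ca by (intro mult_left_mono_neg) auto
      thus ?thesis using F4[of \<sigma>] s True r ha by (simp add: mult.commute)
    next
      case False
      have "(\<sigma> - \<alpha>) * (\<kappa>/\<alpha>) \<le> (\<sigma> - \<alpha>) * (1/u)" using False cb by (intro mult_left_mono) auto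
      thus ?thesis using F3[of \<sigma>] s False r ha by (simp add: mult.commute)
    qed
  next
    case c4
    hence r: "rr \<alpha> \<beta> \<kappa> u = u - 1" using al ab by (simp add: rr_def)
    have hr: "ln 2 * Iref \<alpha> \<beta> \<kappa> a (u-1) = ln u" using h1[of "u-1"] c4 by simp
    show ?thesis
    proof (cases "\<sigma> \<le> \<alpha>")
      case True
      have "ln (1+\<sigma>) \<le> ln u + (1/u) * ((1+\<sigma>) - u)" using ln_tangent[of "1+\<sigma>" u] s u by simp
      moreover have "(1/u) * ((1+\<sigma>) - u) = (1/u) * (\<sigma> - (u - 1))" by (simp add: algebra_simps)
      ultimately show ?thesis using h1[of \<sigma>] True r hr by (simp add: diff_diff_eq2 add.commute)
    next
      case False
      have 1: "ln (1+\<alpha>) \<le> ln u + (1/u) * ((1+\<alpha>) - u)" using ln_tangent[of "1+\<alpha>" u] al u by simp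
      have "1/(1+\<alpha>) \<le> 1/u" using c4 u by (intro divide_left_mono) auto
      hence 2: "(\<sigma> - \<alpha>) * (1/(1+\<alpha>)) \<le> (\<sigma> - \<alpha>) * (1/u)" using False by (intro mult_left_mono) auto
      have 3: "(1/u) * ((1+\<alpha>) - u) + (\<sigma> - \<alpha>) * (1/u) = (1/u) * (\<sigma> - (u - 1))" using u by (simp add: field_simps)
      show ?thesis using G[of \<sigma>] s 1 2 3 r hr by (simp add: mult.commute)
    qed
  next
    case c5
    hence r: "rr \<alpha> \<beta> \<kappa> u = 0" using al ab by (simp add: rr_def)
    have h0: "ln 2 * Iref \<alpha> \<beta> \<kappa> a 0 = 0" using h1[of 0] al by simp
    have le: "ln 2 * Iref \<alpha> \<beta> \<kappa> a \<sigma> \<le> \<sigma>"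
    proof (cases "\<sigma> \<le> \<alpha>")
      case True thus ?thesis using h1[of \<sigma>] ln_add_one_self_le_self[of \<sigma>] s by simp
    next
      case False
      have "(1/(1+\<alpha>)) * (\<sigma> - \<alpha>) \<le> \<sigma> - \<alpha>" using False al by (simp add: field_simps)
      thus ?thesis using G[of \<sigma>] s ln_add_one_self_le_self[of \<alpha>] al by simp
    qed
    have "\<sigma> \<le> (1/u) * \<sigma>" using c5 u s mult_left_le[of u \<sigma>] by (simp add: field_simps)
    thus ?thesis using le r h0 by simp
  qed
qed

lemma wpg: "0 < g \<Longrightarrow> wp \<alpha> \<beta> \<kappa> g \<eta> * g = rr \<alpha> \<beta> \<kappa> (\<eta>*g)"
  using kp by (simp add: wp_def rr_def field_simps)

lemma bigu: "\<alpha> < \<kappa>*u \<Longrightarrow> 1+\<alpha> < u"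
proof -
  assume "\<alpha> < \<kappa>*u"
  hence "\<kappa>*(1+\<alpha>) < \<kappa>*u" using kc by linarith
  thus ?thesis using kp by simp
qed

lemma phi: "Iref \<alpha> \<beta> \<kappa> a (rr \<alpha> \<beta> \<kappa> u) =
   log 2 (max 1 (min u (1+\<alpha>))) + \<kappa> * log 2 (min \<beta> (max \<alpha> (\<kappa>*u))) + a - log 2 (1+\<alpha>)"
proof -
  consider (c1) "\<beta> \<le> \<kappa>*u" | (c2) "\<alpha> < \<kappa>*u" "\<kappa>*u < \<beta>" | (c3) "\<kappa>*u \<le> \<alpha>" "\<alpha>+1 \<le> u"
    | (c4) "\<kappa>*u \<le> \<alpha>" "1 \<le> u" "u < \<alpha>+1" | (c5) "\<kappa>*u \<le> \<alpha>" "u < 1" by linarith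
  thus ?thesis
  proof cases
    case c1
    hence "1+\<alpha> < u" using bigu[of u] ab by linarith
    thus ?thesis using c1 ab al by (simp add: rr_def Iref_def)
  next
    case c2
    hence "1+\<alpha> < u" using bigu[of u] by linarith
    thus ?thesis using c2 ab al by (simp add: rr_def Iref_def)
  next
    case c3
    thus ?thesis using al ab eqa by (simp add: rr_def Iref_def)
  next
    case c4
    thus ?thesis using al ab eqa by (simp add: rr_def Iref_def)
  next
    case c5
    thus ?thesis using al ab eqa by (simp add: rr_def Iref_def)
  qed
qed

lemma rr_nonneg: "0 \<le> rr \<alpha> \<beta> \<kappa> u"
  using al ab by (simp add: rr_def)

end

theorem theorem8:
  fixes B :: nat and \<gamma> :: "nat \<Rightarrow> real" and \<alpha> \<beta> \<kappa> a R :: real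
  assumes "B > 0"
    and "\<forall>b<B. \<gamma> b > 0"
    and "0 < \<alpha>" and "\<alpha> < \<beta>" and "\<kappa> > 0"
    and "\<kappa> * log 2 \<alpha> + a = log 2 (1 + \<alpha>)"
    and "\<kappa> * (1 + \<alpha>) \<le> \<alpha>"
    and "0 < R" and "R < \<kappa> * log 2 \<beta> + a"
  shows "(\<exists>\<eta>. (\<Sum>b<B. Iref \<alpha> \<beta> \<kappa> a (wp \<alpha> \<beta> \<kappa> (\<gamma> b) \<eta> * \<gamma> b)) = real B * R)
       \<and> (\<forall>\<eta>. (\<Sum>b<B. Iref \<alpha> \<beta> \<kappa> a (wp \<alpha> \<beta> \<kappa> (\<gamma> b) \<eta> * \<gamma> b)) = real B * R \<longrightarrow>
             feasible B \<gamma> \<alpha> \<beta> \<kappa> a R (\<lambda>b. wp \<alpha> \<beta> \<kappa> (\<gamma> b) \<eta>)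
           \<and> (\<forall>p. feasible B \<gamma> \<alpha> \<beta> \<kappa> a R p \<longrightarrow>
                 (1 / real B) * (\<Sum>b<B. wp \<alpha> \<beta> \<kappa> (\<gamma> b) \<eta>) \<le> (1 / real B) * (\<Sum>b<B. p b)))"
proof -
  have al: "0<\<alpha>" and ab: "\<alpha><\<beta>" and kp: "\<kappa>>0" and eqa: "\<kappa> * log 2 \<alpha> + a = log 2 (1 + \<alpha>)"
    and kc: "\<kappa> * (1 + \<alpha>) \<le> \<alpha>" using assms by auto
  have Bp: "real B > 0" using assms(1) by simp
  have gp: "\<gamma> b > 0" if "b \<in> {..<B}" for b using assms(2) that by auto
  note W = wpg[OF al ab kp eqa kc]
  note P = phi[OF al ab kp eqa kc]
  define F where "F = (\<lambda>\<eta>. \<Sum>b<B. Iref \<alpha> \<beta> \<kappa> a (wp \<alpha> \<beta> \<kappa> (\<gamma> b) \<eta> * \<gamma> b))"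
  define \<Phi> where "\<Phi> = (\<lambda>\<eta>. \<Sum>b<B. log 2 (max 1 (min (\<eta>*\<gamma> b) (1+\<alpha>)))
      + \<kappa> * log 2 (min \<beta> (max \<alpha> (\<kappa>*(\<eta>*\<gamma> b)))) + a - log 2 (1+\<alpha>))"
  have Frr: "F \<eta> = (\<Sum>b<B. Iref \<alpha> \<beta> \<kappa> a (rr \<alpha> \<beta> \<kappa> (\<eta> * \<gamma> b)))" for \<eta>
    unfolding F_def by (intro sum.cong refl) (simp add: W gp)
  have FP: "F \<eta> = \<Phi> \<eta>" for \<eta>
    unfolding Frr \<Phi>_def by (intro sum.cong refl) (simp add: P)
  have low: "\<alpha> \<le> max \<alpha> x" for x :: real by simp
  have cont: "continuous_on UNIV \<Phi>"
    unfolding \<Phi>_def using al ab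
    by (intro continuous_intros) (auto simp: min_def max_def)
  have F0: "F 0 = 0"
    unfolding Frr using al ab by (simp add: rr_def Iref_def)
  define M where "M = (\<beta>/\<kappa>) * (\<Sum>c<B. 1/\<gamma> c)"
  have big: "\<beta> \<le> \<kappa> * (M * \<gamma> b)" if b: "b \<in> {..<B}" for b
  proof -
    have "1/\<gamma> b \<le> (\<Sum>c<B. 1/\<gamma> c)"
      by (rule member_le_sum[OF b]) (use assms(2) in \<open>auto intro: less_imp_le\<close>)
    hence "(\<beta>/\<kappa>)*(1/\<gamma> b) \<le> M" unfolding M_def using al ab kp by (intro mult_left_mono) auto
    hence "(\<beta>/\<kappa>)*(1/\<gamma> b) * \<gamma> b \<le> M * \<gamma> b" using gp[OF b] by (intro mult_right_mono) auto
    hence "\<beta>/\<kappa> \<le> M * \<gamma> b" using gp[OF b] by simp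
    thus ?thesis using kp by (simp add: field_simps)
  qed
  have M0: "0 \<le> M" unfolding M_def using al ab kp gp
    by (intro mult_nonneg_nonneg sum_nonneg) (auto intro: less_imp_le)
  have FM: "F M = real B * (\<kappa> * log 2 \<beta> + a)"
  proof -
    have "F M = (\<Sum>b<B. \<kappa> * log 2 \<beta> + a)"
      unfolding Frr using al ab
      by (intro sum.cong refl) (simp add: rr_def Iref_def big)
    thus ?thesis by simp
  qed
  have "\<exists>\<eta>. 0 \<le> \<eta> \<and> \<eta> \<le> M \<and> \<Phi> \<eta> = real B * R"
  proof (rule IVT')
    show "\<Phi> 0 \<le> real B * R" using F0 FP[of 0] Bp assms(8) by simp
    show "real B * R \<le> \<Phi> M" using FM FP[of M] Bp assms(9) by simp
    show "0 \<le> M" by (rule M0)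
    show "continuous_on {0..M} \<Phi>" using cont by (rule continuous_on_subset) simp
  qed
  hence ex: "\<exists>\<eta>. F \<eta> = real B * R" using FP by metis
  have opt: "feasible B \<gamma> \<alpha> \<beta> \<kappa> a R (\<lambda>b. wp \<alpha> \<beta> \<kappa> (\<gamma> b) \<eta>)
           \<and> (\<forall>p. feasible B \<gamma> \<alpha> \<beta> \<kappa> a R p \<longrightarrow>
                 (1 / real B) * (\<Sum>b<B. wp \<alpha> \<beta> \<kappa> (\<gamma> b) \<eta>) \<le> (1 / real B) * (\<Sum>b<B. p b))"
    if E: "F \<eta> = real B * R" for \<eta>
  proof -
    have ep: "\<eta> > 0"
    proof (rule ccontr)
      assume "\<not> \<eta> > 0"
      hence n: "\<eta> * \<gamma> b \<le> 0" if "b \<in> {..<B}" for b using gp[OF that] by (simp add: mult_nonpos_nonneg)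
      have "F \<eta> = 0" unfolding Frr
      proof (intro sum.neutral ballI)
        fix b assume b: "b \<in> {..<B}"
        have "\<kappa> * (\<eta> * \<gamma> b) \<le> 0" using n[OF b] kp by (simp add: mult_nonneg_nonpos)
        thus "Iref \<alpha> \<beta> \<kappa> a (rr \<alpha> \<beta> \<kappa> (\<eta> * \<gamma> b)) = 0" using n[OF b] al ab by (simp add: rr_def Iref_def)
      qed
      thus False using E Bp assms(8) by simp
    qed
    have wnn: "0 \<le> wp \<alpha> \<beta> \<kappa> (\<gamma> b) \<eta>" if b: "b \<in> {..<B}" for b
    proof -
      have "0 \<le> wp \<alpha> \<beta> \<kappa> (\<gamma> b) \<eta> * \<gamma> b" using W[OF gp[OF b]] rr_nonneg[OF al ab kp eqa kc] by simp
      thus ?thesis using gp[OF b] by (simp add: zero_le_mult_iff)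
    qed
    have feas: "feasible B \<gamma> \<alpha> \<beta> \<kappa> a R (\<lambda>b. wp \<alpha> \<beta> \<kappa> (\<gamma> b) \<eta>)"
      unfolding feasible_def using wnn E Bp unfolding F_def by auto
    have best: "(1 / real B) * (\<Sum>b<B. wp \<alpha> \<beta> \<kappa> (\<gamma> b) \<eta>) \<le> (1 / real B) * (\<Sum>b<B. p b)"
      if fp: "feasible B \<gamma> \<alpha> \<beta> \<kappa> a R p" for p
    proof -
      define w where "w = (\<lambda>b. wp \<alpha> \<beta> \<kappa> (\<gamma> b) \<eta>)"
      define K where "K = \<eta> * ln 2"
      have Kp: "K > 0" unfolding K_def using ep by simp
      have pb: "\<forall>b<B. 0 \<le> p b" and pR: "R \<le> (1 / real B) * (\<Sum>b<B. Iref \<alpha> \<beta> \<kappa> a (p b * \<gamma> b))"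
        using fp unfolding feasible_def by auto
      have pR2: "real B * R \<le> (\<Sum>b<B. Iref \<alpha> \<beta> \<kappa> a (p b * \<gamma> b))"
        using pR Bp by (simp add: field_simps)
      have each: "K * Iref \<alpha> \<beta> \<kappa> a (p b * \<gamma> b) \<le> K * Iref \<alpha> \<beta> \<kappa> a (w b * \<gamma> b) + (p b - w b)"
        if b: "b \<in> {..<B}" for b
      proof -
        let ?g = "\<gamma> b"
        have g: "?g > 0" using gp[OF b] .
        have u: "\<eta> * ?g > 0" using g ep by simp
        have s: "0 \<le> p b * ?g" using pb b g by simp
        have r: "rr \<alpha> \<beta> \<kappa> (\<eta> * ?g) = w b * ?g" unfolding w_def using W[OF g] by simp
        have "ln 2 * Iref \<alpha> \<beta> \<kappa> a (p b * ?g) \<le> ln 2 * Iref \<alpha> \<beta> \<kappa> a (w b * ?g) + (1/(\<eta>*?g)) * (p b * ?g - w b * ?g)"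
          using sg[OF al ab kp eqa kc u s] r by simp
        hence "\<eta> * (ln 2 * Iref \<alpha> \<beta> \<kappa> a (p b * ?g)) \<le> \<eta> * (ln 2 * Iref \<alpha> \<beta> \<kappa> a (w b * ?g) + (1/(\<eta>*?g)) * (p b * ?g - w b * ?g))"
          using ep by (intro mult_left_mono) auto
        moreover have "\<eta> * ((1/(\<eta>*?g)) * (p b * ?g - w b * ?g)) = p b - w b" using ep g by (simp add: field_simps)
        ultimately show ?thesis unfolding K_def by (simp add: algebra_simps)
      qed
      have "(\<Sum>b<B. K * Iref \<alpha> \<beta> \<kappa> a (p b * \<gamma> b)) \<le> (\<Sum>b<B. K * Iref \<alpha> \<beta> \<kappa> a (w b * \<gamma> b) + (p b - w b))"
        by (rule sum_mono) (rule each)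
      hence 1: "K * (\<Sum>b<B. Iref \<alpha> \<beta> \<kappa> a (p b * \<gamma> b)) \<le> K * (\<Sum>b<B. Iref \<alpha> \<beta> \<kappa> a (w b * \<gamma> b)) + ((\<Sum>b<B. p b) - (\<Sum>b<B. w b))"
        by (simp add: sum_distrib_left sum.distrib sum_subtractf)
      have 2: "(\<Sum>b<B. Iref \<alpha> \<beta> \<kappa> a (w b * \<gamma> b)) = real B * R" using E unfolding F_def w_def .
      have "K * (real B * R) \<le> K * (\<Sum>b<B. Iref \<alpha> \<beta> \<kappa> a (p b * \<gamma> b))" using pR2 Kp by (intro mult_left_mono) auto
      hence "(\<Sum>b<B. w b) \<le> (\<Sum>b<B. p b)" using 1 2 by simp
      hence "(1 / real B) * (\<Sum>b<B. w b) \<le> (1 / real B) * (\<Sum>b<B. p b)" using Bp by (intro mult_left_mono) auto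
      thus ?thesis unfolding w_def .
    qed
    show ?thesis using feas best by blast
  qed
  show ?thesis using ex opt unfolding F_def by blast
qed

end
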